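(* The following set $\mathcal B_1$ of elements of $\hat{G}_{\Lambda,\Lambda_F}$ is linearly independent: (1) all $\bar\Xi^{\lambda_1}_{\lambda_2}\otimes f^{\dot I}_{\dot J}\otimes\Xi^{\lambda_3}_{\lambda_4}$ with $\lambda_1+\lambda_2>2$ and $\lambda_3+\lambda_4>2$; (2) all $\bar\Xi^{\lambda_1}_{\lambda_2}\otimes l^{\dot I}_{\dot J}$; (3) all $r^{\dot I}_{\dot J}\otimes\Xi^{\lambda_1}_{\lambda_2}$ with $\lambda_1\ne1$ or $\lambda_2\ne1$; (4) $\sigma^{\emptyset}_{\emptyset}$, all $\sigma^{I}_{\emptyset}$ and all $\sigma^{\emptyset}_{J}$; (5) all $\sigma^{I}_{J}$ such that the first integers of $I$ and $J$ are not simultaneously $1$. Here $\dot I,\dot J$ range over all sequences, $I,J$ over non-empty sequences, and the $\lambda_i$ over $\{1,\dots,\Lambda_F\}$.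
   Context: Fix positive integers $\Lambda,\Lambda_F$. A sequence $\dot I=i_1\cdots i_a$ is a finite, possibly empty, sequence of integers in $\{1,\dots,\Lambda\}$; $\emptyset$ is the empty sequence, undotted letters $I,J$ denote non-empty sequences, juxtaposition denotes concatenation, and $\delta^{\dot I}_{\dot J}$ is $1$ if $\dot I=\dot J$ and $0$ otherwise (similarly for integers). Let $\mathcal{T}_o$ be the complex vector space with basis the symbols $\bar\phi^{\lambda_1}\otimes s^{\dot K}\otimes\phi^{\lambda_2}$, $1\le\lambda_1,\lambda_2\le\Lambda_F$, $\dot K$ any sequence. For all sequences $\dot I,\dot J$ and all $\lambda_i\in\{1,\dots,\Lambda_F\}$ define linear operators on $\mathcal{T}_o$ (each written as a single symbol): first kind: $\bar\Xi^{\lambda_1}_{\lambda_2}\otimes f^{\dot I}_{\dot J}\otimes\Xi^{\lambda_3}_{\lambda_4}(\bar\phi^{\lambda_5}\otimes s^{\dot K}\otimes\phi^{\lambda_6})=\delta^{\lambda_5}_{\lambda_2}\delta^{\dot K}_{\dot J}\delta^{\lambda_6}_{\lambda_4}\,\bar\phi^{\lambda_1}\otimes s^{\dot I}\otimes\phi^{\lambda_3}$; second kind: $\bar\Xi^{\lambda_1}_{\lambda_2}\otimes l^{\dot I}_{\dot J}(\bar\phi^{\lambda_3}\otimes s^{\dot K}\otimes\phi^{\lambda_4})=\delta^{\lambda_3}_{\lambda_2}\sum_{\dot K_1\dot K_2=\dot K}\delta^{\dot K_1}_{\dot J}\,\bar\phi^{\lambda_1}\otimes s^{\dot I\dot K_2}\otimes\phi^{\lambda_4}$;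 third kind: $r^{\dot I}_{\dot J}\otimes\Xi^{\lambda_1}_{\lambda_2}(\bar\phi^{\lambda_3}\otimes s^{\dot K}\otimes\phi^{\lambda_4})=\delta^{\lambda_4}_{\lambda_2}\sum_{\dot K_1\dot K_2=\dot K}\delta^{\dot K_2}_{\dot J}\,\bar\phi^{\lambda_3}\otimes s^{\dot K_1\dot I}\otimes\phi^{\lambda_1}$; fourth kind: $\sigma^{\dot I}_{\dot J}(\bar\phi^{\lambda_1}\otimes s^{\dot K}\otimes\phi^{\lambda_2})=\sum_{\dot K_1\dot K_2\dot K_3=\dot K}\delta^{\dot K_2}_{\dot J}\,\bar\phi^{\lambda_1}\otimes s^{\dot K_1\dot I\dot K_3}\otimes\phi^{\lambda_2}$; sums run over all ways to write $\dot K$ as a concatenation of possibly empty sequences. The open string algebra $\hat{G}_{\Lambda,\Lambda_F}$ is the complex Lie algebra (commutator bracket) of operators on $\mathcal{T}_o$ spanned by all operators of these four kinds. *)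

theory Defs
  imports Complex_Main
begin

text \<open>Basis symbols phibar^a (x) s^K (x) phi^b of T_o are triples (a, K, b). A linear operator on T_o is determined by its
  values on the basis; we represent the value on a basis element x as the coefficient
  function y \<mapsto> (coefficient of basis element y), i.e. an operator is
  op :: basis \<Rightarrow> basis \<Rightarrow> complex.\<close>

type_synonym basis = "nat \<times> nat list \<times> nat"

datatype gen =
    GF nat nat "nat list" "nat list" nat nat   \<comment> \<open>Xibar^{l1}_{l2} (x) f^I_J (x) Xi^{l3}_{l4}\<close>
  | GL nat nat "nat list" "nat list"           \<comment> \<open>Xibar^{l1}_{l2} (x) l^I_J\<close>
  | GR "nat list" "nat list" nat nat           \<comment> \<open>r^I_J (x) Xi^{l1}_{l2}\<close>
  | GS "nat list" "nat list"

text \<open>act g x y = coefficient of basis element y in (operator g applied to basis element x).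
  Sums run over all decompositions K = K1 K2 (resp. K1 K2 K3), written via take/drop.\<close>
fun act :: "gen \<Rightarrow> basis \<Rightarrow> basis \<Rightarrow> complex" where
  "act (GF l1 l2 I J l3 l4) (a, K, b) y =
     (if a = l2 \<and> K = J \<and> b = l4 \<and> y = (l1, I, l3) then 1 else 0)"
| "act (GL l1 l2 I J) (a, K, b) y =
     (if a = l2 then (\<Sum>i\<in>{0..length K}.
         if take i K = J \<and> y = (l1, I @ drop i K, b) then 1 else 0) else 0)"
| "act (GR I J l1 l2) (a, K, b) y =
     (if b = l2 then (\<Sum>i\<in>{0..length K}.
         if drop i K = J \<and> y = (a, take i K @ I, l1) then 1 else 0) else 0)"
| "act (GS I J) (a, K, b) y =
     (\<Sum>(i, j)\<in>{(i, j). i \<le> j \<and> j \<le> length K}.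
         if take (j - i) (drop i K) = J \<and> y = (a, take i K @ I @ drop j K, b) then 1 else 0)"

definition valid_seq :: "nat \<Rightarrow> nat list \<Rightarrow> bool" where
  "valid_seq \<Lambda> K \<longleftrightarrow> set K \<subseteq> {1..\<Lambda>}"

definition valid_lam :: "nat \<Rightarrow> nat \<Rightarrow> bool" where
  "valid_lam \<Lambda>F l \<longleftrightarrow> l \<in> {1..\<Lambda>F}"

definition valid_basis :: "nat \<Rightarrow> nat \<Rightarrow> basis \<Rightarrow> bool" where
  "valid_basis \<Lambda> \<Lambda>F x \<longleftrightarrow>
     (case x of (a, K, b) \<Rightarrow> valid_lam \<Lambda>F a \<and> valid_seq \<Lambda> K \<and> valid_lam \<Lambda>F b)"

definition B1 :: "nat \<Rightarrow> nat \<Rightarrow> gen set" where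
  "B1 \<Lambda> \<Lambda>F =
     {GF l1 l2 I J l3 l4 | l1 l2 I J l3 l4.
        valid_lam \<Lambda>F l1 \<and> valid_lam \<Lambda>F l2 \<and> valid_lam \<Lambda>F l3 \<and> valid_lam \<Lambda>F l4 \<and>
        valid_seq \<Lambda> I \<and> valid_seq \<Lambda> J \<and> l1 + l2 > 2 \<and> l3 + l4 > 2}
   \<union> {GL l1 l2 I J | l1 l2 I J.
        valid_lam \<Lambda>F l1 \<and> valid_lam \<Lambda>F l2 \<and> valid_seq \<Lambda> I \<and> valid_seq \<Lambda> J}
   \<union> {GR I J l1 l2 | I J l1 l2.
        valid_lam \<Lambda>F l1 \<and> valid_lam \<Lambda>F l2 \<and> valid_seq \<Lambda> I \<and> valid_seq \<Lambda> J \<and>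
        (l1 \<noteq> 1 \<or> l2 \<noteq> 1)}
   \<union> {GS [] []}
   \<union> {GS I [] | I. I \<noteq> [] \<and> valid_seq \<Lambda> I}
   \<union> {GS [] J | J. J \<noteq> [] \<and> valid_seq \<Lambda> J}
   \<union> {GS I J | I J. I \<noteq> [] \<and> J \<noteq> [] \<and> valid_seq \<Lambda> I \<and> valid_seq \<Lambda> J \<and>
        \<not> (hd I = 1 \<and> hd J = 1)}"

end

theory Submission
  imports Defs
begin

definition Lop :: "nat list \<Rightarrow> nat list \<Rightarrow> nat list \<Rightarrow> nat list \<Rightarrow> complex" where
  "Lop I J K K' = (if take (length J) K = J \<and> K' = I @ drop (length J) K then 1 else 0)"

fun Sop :: "nat list \<Rightarrow> nat list \<Rightarrow> nat list \<Rightarrow> nat list \<Rightarrow> complex" where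
  "Sop I J [] K' = Lop I J [] K'"
| "Sop I J (k # K) K' = Lop I J (k # K) K' + (if K' \<noteq> [] \<and> hd K' = k then Sop I J K (tl K') else 0)"

fun LC :: "(nat list \<times> nat list \<Rightarrow> complex) \<Rightarrow> nat list \<Rightarrow> nat list \<Rightarrow> complex" where
 "LC f [] K' = f (K', [])"
| "LC f (k # K) K' = (if drop (length K' - length (k#K)) K' = k # K then f (take (length K' - length (k#K)) K', []) else 0) + LC (\<lambda>p. f (fst p, k # snd p)) K K'"

lemma sfx_iff: "(drop (length K' - length L) K' = L \<and> take (length K' - length L) K' = P) \<longleftrightarrow> K' = P @ L"
proof
  assume h: "drop (length K' - length L) K' = L \<and> take (length K' - length L) K' = P"
  then show "K' = P @ L" by (metis append_take_drop_id)
next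
  assume "K' = P @ L" then show "drop (length K' - length L) K' = L \<and> take (length K' - length L) K' = P" by simp
qed

lemma LC_zero: "LC (\<lambda>_. 0) K K' = 0"
  by (induction K) auto

lemma LC_lin: "LC (\<lambda>p. \<Sum>g\<in>S. c g * w g p) K K' = (\<Sum>g\<in>S. c g * LC (w g) K K')"
proof (induction K arbitrary: w)
  case Nil then show ?case by simp
next
  case (Cons k K)
  have "LC (\<lambda>p. \<Sum>g\<in>S. c g * w g p) (k # K) K' =
     (if drop (length K' - length (k#K)) K' = k # K then (\<Sum>g\<in>S. c g * w g (take (length K' - length (k#K)) K', [])) else 0)
     + LC (\<lambda>p. \<Sum>g\<in>S. c g * (\<lambda>g p. w g (fst p, k # snd p)) g p) K K'" by simp
  also have "\<dots> = (\<Sum>g\<in>S. c g * LC (w g) (k # K) K')"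
    unfolding Cons.IH by (simp add: sum.distrib distrib_left)
  finally show ?case .
qed

lemma LC_diff: "LC (\<lambda>p. f p - h p) K K' = LC f K K' - LC h K K'"
  by (induction K arbitrary: f h) auto

lemma LC_indep:
  assumes "\<forall>K K'. valid_seq \<Lambda> K \<longrightarrow> LC f K K' = 0" and "valid_seq \<Lambda> Q"
  shows "f (P, Q) = 0"
  using assms
proof (induction Q arbitrary: f)
  case Nil
  have "valid_seq \<Lambda> []" by (simp add: valid_seq_def)
  then show ?case using Nil(1) by (metis LC.simps(1))
next
  case (Cons q Q)
  have v0: "valid_seq \<Lambda> []" by (simp add: valid_seq_def)
  have f0: "f (R, []) = 0" for R using Cons.prems(1) v0 by (metis LC.simps(1))
  have "(\<lambda>p. f (fst p, q # snd p)) (P, Q) = 0"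
  proof (rule Cons.IH)
    show "valid_seq \<Lambda> Q" using Cons.prems(2) by (simp add: valid_seq_def)
    show "\<forall>K K'. valid_seq \<Lambda> K \<longrightarrow> LC (\<lambda>p. f (fst p, q # snd p)) K K' = 0"
    proof (intro allI impI)
      fix K K' assume "valid_seq \<Lambda> K"
      then have "valid_seq \<Lambda> (q # K)" using Cons.prems(2) by (simp add: valid_seq_def)
      then have "LC f (q # K) K' = 0" using Cons.prems(1) by blast
      then show "LC (\<lambda>p. f (fst p, q # snd p)) K K' = 0" using f0 by (simp split: if_splits)
    qed
  qed
  then show ?case by simp
qed

lemma LC_ind: "LC (\<lambda>p. if p = (P0, Q0) then 1 else 0) K K' = Lop P0 Q0 K K'"
proof (induction K arbitrary: Q0)
  case Nil then show ?case by (auto simp: Lop_def)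
next
  case (Cons k K)
  show ?case
  proof (cases Q0)
    case Nil
    have "LC (\<lambda>p. if p = (P0, Q0) then 1 else 0) (k # K) K' =
      (if drop (length K' - length (k#K)) K' = k # K \<and> take (length K' - length (k#K)) K' = P0 then 1 else 0) + LC (\<lambda>_. 0) K K'"
      using Nil by simp
    also have "\<dots> = Lop P0 Q0 (k # K) K'" using Nil sfx_iff[of K' "k#K" P0] by (simp add: LC_zero Lop_def)
    finally show ?thesis .
  next
    case (Cons q Q1)
    have e: "(\<lambda>p. if (fst p, k # snd p) = (P0, Q0) then 1 else 0) = (\<lambda>p. if k = q then (if p = (P0, Q1) then 1 else 0) else (0::complex))"
      using Cons by (auto simp: fun_eq_iff)
    have "LC (\<lambda>p. if p = (P0, Q0) then 1 else 0) (k # K) K' = LC (\<lambda>p. if k = q then (if p = (P0, Q1) then 1 else 0) else (0::complex)) K K'"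
      using Cons e by simp
    also have "\<dots> = (if k = q then Lop P0 Q1 K K' else 0)"
      using Cons.IH LC_zero by (cases "k = q") auto
    also have "\<dots> = Lop P0 Q0 (k # K) K'" using Cons by (auto simp: Lop_def)
    finally show ?thesis .
  qed
qed

definition ind2 :: "nat list \<Rightarrow> nat list \<Rightarrow> nat list \<times> nat list \<Rightarrow> complex" where
  "ind2 I J p = (if fst p \<noteq> [] \<and> snd p \<noteq> [] \<and> hd (fst p) = hd (snd p) \<and> tl (fst p) = I \<and> tl (snd p) = J then 1 else 0)"

lemma LC_ind2: "LC (ind2 I J) K K' = (if K \<noteq> [] \<and> K' \<noteq> [] \<and> hd K = hd K' then Lop I J (tl K) (tl K') else 0)"
proof (cases K)
  case Nil then show ?thesis by (simp add: ind2_def)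
next
  case (Cons k K0)
  have e: "(\<lambda>p. ind2 I J (fst p, k # snd p)) = (\<lambda>p. if p = (k # I, J) then 1 else 0)"
    by (auto simp: fun_eq_iff ind2_def neq_Nil_conv)
  have "LC (ind2 I J) K K' = LC (\<lambda>p. ind2 I J (fst p, k # snd p)) K0 K'"
    using Cons by (simp add: ind2_def)
  also have "\<dots> = Lop (k # I) J K0 K'" unfolding e LC_ind ..
  also have "\<dots> = (if K \<noteq> [] \<and> K' \<noteq> [] \<and> hd K = hd K' then Lop I J (tl K) (tl K') else 0)"
    using Cons by (cases K') (auto simp: Lop_def)
  finally show ?thesis .
qed


lemma sum_take1:
  "(\<Sum>i\<in>{0..length K}. if take i K = J \<and> P i then 1 else (0::complex)) =
   (if take (length J) K = J \<and> P (length J) then 1 else 0)"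
proof -
  have "(\<Sum>i\<in>{0..length K}. if take i K = J \<and> P i then 1 else (0::complex)) =
        (\<Sum>i\<in>{0..length K}. if i = length J then (if take (length J) K = J \<and> P (length J) then 1 else 0) else 0)"
    by (rule sum.cong) auto
  also have "\<dots> = (if take (length J) K = J \<and> P (length J) then 1 else 0)"
    by (auto simp: sum.delta)
  finally show ?thesis .
qed

lemma sum_drop1:
  "(\<Sum>i\<in>{0..length K}. if drop i K = J \<and> P i then 1 else (0::complex)) =
   (if length J \<le> length K \<and> drop (length K - length J) K = J \<and> P (length K - length J) then 1 else 0)"
proof -
  have "(\<Sum>i\<in>{0..length K}. if drop i K = J \<and> P i then 1 else (0::complex)) =
        (\<Sum>i\<in>{0..length K}. if i = length K - length J then (if length J \<le> length K \<and> drop (length K - length J) K = J \<and> P (length K - length J) then 1 else 0) else 0)"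
    by (rule sum.cong) auto
  also have "\<dots> = (if length J \<le> length K \<and> drop (length K - length J) K = J \<and> P (length K - length J) then 1 else 0)"
    by (auto simp: sum.delta)
  finally show ?thesis .
qed

lemma act_GF: "act (GF l1 l2 I J l3 l4) (a, K, b) (a', K', b') =
   (if a = l2 \<and> K = J \<and> b = l4 \<and> a' = l1 \<and> K' = I \<and> b' = l3 then 1 else 0)"
  by auto

lemma act_GL: "act (GL l1 l2 I J) (a, K, b) (a', K', b') =
   (if a = l2 \<and> a' = l1 \<and> b' = b then Lop I J K K' else 0)"
  using sum_take1[of K J "\<lambda>i. (a', K', b') = (l1, I @ drop i K, b)"]
  by (auto simp: Lop_def)

lemma act_GR: "act (GR I J l1 l2) (a, K, b) (a', K', b') =
   (if b = l2 \<and> b' = l1 \<and> a' = a then Lop (rev I) (rev J) (rev K) (rev K') else 0)"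
proof -
  have s: "act (GR I J l1 l2) (a, K, b) (a', K', b') = (if b = l2 then
     (if length J \<le> length K \<and> drop (length K - length J) K = J \<and> (a', K', b') = (a, take (length K - length J) K @ I, l1) then 1 else 0) else 0)"
    using sum_drop1[of K J "\<lambda>i. (a', K', b') = (a, take i K @ I, l1)"] by simp
  have e: "(take (length J) (rev K) = rev J \<and> rev K' = rev I @ drop (length J) (rev K)) \<longleftrightarrow>
        (length J \<le> length K \<and> drop (length K - length J) K = J \<and> K' = take (length K - length J) K @ I)"
  proof
    assume h: "take (length J) (rev K) = rev J \<and> rev K' = rev I @ drop (length J) (rev K)"
    then have l: "length J \<le> length K" by (metis length_rev length_take min.absorb_iff2 min.commute)
    from h have "rev (drop (length K - length J) K) = rev J" by (simp add: take_rev)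
    then have d: "drop (length K - length J) K = J" by simp
    from h have "rev K' = rev I @ rev (take (length K - length J) K)" by (simp add: drop_rev)
    then have "K' = take (length K - length J) K @ I" by (metis rev_append rev_rev_ident)
    with l d show "length J \<le> length K \<and> drop (length K - length J) K = J \<and> K' = take (length K - length J) K @ I" by simp
  next
    assume h: "length J \<le> length K \<and> drop (length K - length J) K = J \<and> K' = take (length K - length J) K @ I"
    then show "take (length J) (rev K) = rev J \<and> rev K' = rev I @ drop (length J) (rev K)"
      by (simp add: take_rev drop_rev)
  qed
  show ?thesis unfolding s Lop_def length_rev using e by auto
qed

lemma pairs_split: "{(i, j). i \<le> j \<and> j \<le> Suc n} =
   (\<lambda>j. (0, j)) ` {0..Suc n} \<union> (\<lambda>(i, j). (Suc i, Suc j)) ` {(i, j). i \<le> j \<and> j \<le> n}"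
proof (rule set_eqI)
  fix p :: "nat \<times> nat"
  obtain i j where p: "p = (i, j)" by (cases p)
  show "p \<in> {(i, j). i \<le> j \<and> j \<le> Suc n} \<longleftrightarrow> p \<in> (\<lambda>j. (0, j)) ` {0..Suc n} \<union> (\<lambda>(i, j). (Suc i, Suc j)) ` {(i, j). i \<le> j \<and> j \<le> n}"
  proof (cases i)
    case 0 then show ?thesis using p by auto
  next
    case (Suc i')
    then have "j > 0 \<longrightarrow> (i, j) = (\<lambda>(i, j). (Suc i, Suc j)) (i', j - 1)" by auto
    then show ?thesis using p Suc by (auto simp: image_iff) presburger
  qed
qed

lemma fin_pairs: "finite {(i, j). i \<le> j \<and> j \<le> (n::nat)}"
  by (rule finite_subset[of _ "{0..n} \<times> {0..n}"]) auto

lemma act_GS_same: "act (GS I J) (a, K, b) (a, K', b) = Sop I J K K'"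
proof (induction K arbitrary: K')
  case Nil
  have "{(i, j). i \<le> j \<and> j \<le> (0::nat)} = {(0, 0)}" by auto
  then show ?case by (simp add: Lop_def) 
next
  case (Cons k K)
  let ?F = "\<lambda>(i, j). if take (j - i) (drop i (k # K)) = J \<and> (a, K', b) = (a, take i (k # K) @ I @ drop j (k # K), b) then 1 else (0::complex)"
  have d: "(\<lambda>j. (0::nat, j)) ` {0..Suc (length K)} \<inter> (\<lambda>(i, j). (Suc i, Suc j)) ` {(i, j). i \<le> j \<and> j \<le> length K} = {}" by auto
  have "act (GS I J) (a, k # K, b) (a, K', b) = sum ?F {(i, j). i \<le> j \<and> j \<le> length (k # K)}" by simp
  also have "\<dots> = sum ?F ((\<lambda>j. (0, j)) ` {0..Suc (length K)}) + sum ?F ((\<lambda>(i, j). (Suc i, Suc j)) ` {(i, j). i \<le> j \<and> j \<le> length K})"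
    unfolding length_Cons pairs_split by (rule sum.union_disjoint) (auto simp: d fin_pairs)
  also have "sum ?F ((\<lambda>j. (0, j)) ` {0..Suc (length K)}) = (\<Sum>j\<in>{0..length (k#K)}. if take j (k # K) = J \<and> K' = I @ drop j (k # K) then 1 else 0)"
    by (subst sum.reindex) (auto simp: inj_on_def)
  also have "\<dots> = Lop I J (k # K) K'" using sum_take1[of "k#K" J "\<lambda>j. K' = I @ drop j (k # K)"] by (simp add: Lop_def)
  also have "sum ?F ((\<lambda>(i, j). (Suc i, Suc j)) ` {(i, j). i \<le> j \<and> j \<le> length K}) =
     (\<Sum>(i, j)\<in>{(i, j). i \<le> j \<and> j \<le> length K}. if take (j - i) (drop i K) = J \<and> K' = k # (take i K @ I @ drop j K) then 1 else 0)"
    by (subst sum.reindex) (auto simp: inj_on_def intro!: sum.cong)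
  also have "\<dots> = (if K' \<noteq> [] \<and> hd K' = k then act (GS I J) (a, K, b) (a, tl K', b) else 0)"
    by (cases K') (auto intro!: sum.cong)
  also have "\<dots> = (if K' \<noteq> [] \<and> hd K' = k then Sop I J K (tl K') else 0)" using Cons.IH by simp
  finally show ?case by simp
qed

lemma act_GS: "act (GS I J) (a, K, b) (a', K', b') = (if a' = a \<and> b' = b then Sop I J K K' else 0)"
  using act_GS_same by (cases "a' = a \<and> b' = b") auto


declare act.simps[simp del]

lemma sum_delta_c: "finite S \<Longrightarrow> (\<Sum>g\<in>S. c g * (if P \<and> g = g0 then 1 else 0)) = (if P \<and> g0 \<in> S then c g0 else (0::complex))"
  by (cases P) (simp_all add: sum.delta' if_distrib[of "\<lambda>x. c _ * x"] cong: if_cong)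

lemma sum_delta_c': "finite S \<Longrightarrow> (\<Sum>g\<in>S. c g * (if g = g0 then 1 else 0)) = (if g0 \<in> S then c g0 else (0::complex))"
  using sum_delta_c[of S c True g0] by simp

lemma core:
  assumes L: "\<Lambda> > 0" and fin: "finite S" and sub: "S \<subseteq> B1 \<Lambda> \<Lambda>F"
    and H: "\<forall>x. valid_basis \<Lambda> \<Lambda>F x \<longrightarrow> (\<forall>y. (\<Sum>g\<in>S. c g * act g x y) = 0)"
    and va': "valid_lam \<Lambda>F a'" and va: "valid_lam \<Lambda>F a"
    and vQ: "valid_seq \<Lambda> Q"
  shows "(if GL a' a P Q \<in> S then c (GL a' a P Q) else 0) = 0 \<and>
         (a' = a \<longrightarrow> (if GS P Q \<in> S then c (GS P Q) else 0) = 0)"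
proof -
  define \<alpha> where "\<alpha> P Q = (if GL a' a P Q \<in> S then c (GL a' a P Q) else 0)" for P Q
  define \<beta> where "\<beta> P Q = (if GS P Q \<in> S then c (GS P Q) else 0)" for P Q
  define w where "w g p = (if True \<and> g = GL a' a (fst p) (snd p) then 1 else 0)
     - (if (fst p \<noteq> [] \<and> snd p \<noteq> [] \<and> hd (fst p) = hd (snd p)) \<and> g = GL a' a (tl (fst p)) (tl (snd p)) then 1 else 0)
     + (if a' = a \<and> g = GS (fst p) (snd p) then 1 else (0::complex))" for g p
  have v1: "valid_lam \<Lambda>F 1" using va by (simp add: valid_lam_def)
  have vs1: "valid_seq \<Lambda> (1 # R)" if "valid_seq \<Lambda> R" for R using that L by (simp add: valid_seq_def)
  have vtl: "valid_seq \<Lambda> (tl R)" if "valid_seq \<Lambda> R" for R using that by (cases R) (auto simp: valid_seq_def)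
  have pg: "c g * LC (w g) K K' = c g * (act g (a, K, 1) (a', K', 1) -
       (if K \<noteq> [] \<and> K' \<noteq> [] \<and> hd K = hd K' then act g (a, tl K, 1) (a', tl K', 1) else 0))"
    if gS: "g \<in> S" for g K K'
  proof (cases g)
    case (GF l1 l2 I J l3 l4)
    have "l3 + l4 > 2" using gS sub GF by (auto simp: B1_def)
    moreover have "w g = (\<lambda>_. 0)" using GF by (auto simp: w_def fun_eq_iff)
    moreover have "act g (a, K2, 1) (a', K2', 1) = 0" for K2 K2'
      using GF calculation(1) by (simp add: act_GF)
    ultimately show ?thesis by (simp add: LC_zero)
  next
    case (GL l1 l2 I J)
    show ?thesis
    proof (cases "l1 = a' \<and> l2 = a")
      case True
      have "w g = (\<lambda>p. (if p = (I, J) then 1 else 0) - ind2 I J p)"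
        using GL True by (auto simp: w_def fun_eq_iff ind2_def)
      then show ?thesis using GL True by (simp add: LC_diff LC_ind LC_ind2 act_GL)
    next
      case False
      have "w g = (\<lambda>_. 0)" using GL False by (auto simp: w_def fun_eq_iff)
      then show ?thesis using GL False by (auto simp add: LC_zero act_GL)
    qed
  next
    case (GR I J l1 l2)
    have "l1 \<noteq> 1 \<or> l2 \<noteq> 1" using gS sub GR by (auto simp: B1_def)
    moreover have "w g = (\<lambda>_. 0)" using GR by (auto simp: w_def fun_eq_iff)
    ultimately show ?thesis using GR by (auto simp add: LC_zero act_GR)
  next
    case (GS I J)
    show ?thesis
    proof (cases "a' = a")
      case True
      have "w g = (\<lambda>p. (if p = (I, J) then 1 else 0))"
        using GS True by (auto simp: w_def fun_eq_iff)
      then show ?thesis using GS True by (cases K) (simp_all add: LC_ind act_GS)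
    next
      case False
      have "w g = (\<lambda>_. 0)" using GS False by (auto simp: w_def fun_eq_iff)
      then show ?thesis using GS False by (auto simp add: LC_zero act_GS)
    qed
  qed
  have key: "\<forall>K K'. valid_seq \<Lambda> K \<longrightarrow> LC (\<lambda>p. \<Sum>g\<in>S. c g * w g p) K K' = 0"
  proof (intro allI impI)
    fix K K' assume vK: "valid_seq \<Lambda> K"
    have h1: "(\<Sum>g\<in>S. c g * act g (a, K, 1) (a', K', 1)) = 0"
      using H vK va v1 by (simp add: valid_basis_def)
    have h2: "(\<Sum>g\<in>S. c g * act g (a, tl K, 1) (a', tl K', 1)) = 0"
      using H vtl[OF vK] va v1 by (simp add: valid_basis_def)
    have "LC (\<lambda>p. \<Sum>g\<in>S. c g * w g p) K K' = (\<Sum>g\<in>S. c g * LC (w g) K K')" by (rule LC_lin)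
    also have "\<dots> = (\<Sum>g\<in>S. c g * (act g (a, K, 1) (a', K', 1) -
       (if K \<noteq> [] \<and> K' \<noteq> [] \<and> hd K = hd K' then act g (a, tl K, 1) (a', tl K', 1) else 0)))"
      by (rule sum.cong) (auto simp: pg)
    also have "\<dots> = 0"
    proof (cases "K \<noteq> [] \<and> K' \<noteq> [] \<and> hd K = hd K'")
      case True then show ?thesis using h1 h2 by (simp add: right_diff_distrib sum_subtractf)
    next
      case False
      then have "\<And>g. (if K \<noteq> [] \<and> K' \<noteq> [] \<and> hd K = hd K' then act g (a, tl K, 1) (a', tl K', 1) else 0) = 0"
        by (simp only: if_False)
      then show ?thesis using h1 by simp
    qed
    finally show "LC (\<lambda>p. \<Sum>g\<in>S. c g * w g p) K K' = 0" .
  qed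
  have sumw: "(\<Sum>g\<in>S. c g * w g (P, Q)) = \<alpha> P Q - (if P \<noteq> [] \<and> Q \<noteq> [] \<and> hd P = hd Q then \<alpha> (tl P) (tl Q) else 0)
      + (if a' = a then \<beta> P Q else 0)" for P Q
    unfolding w_def fst_conv snd_conv
    by (simp add: distrib_left right_diff_distrib sum.distrib sum_subtractf sum_delta_c[OF fin] sum_delta_c'[OF fin] \<alpha>_def \<beta>_def
        del: simp_thms(21))
  have rel: "\<alpha> P Q - (if P \<noteq> [] \<and> Q \<noteq> [] \<and> hd P = hd Q then \<alpha> (tl P) (tl Q) else 0)
      + (if a' = a then \<beta> P Q else 0) = 0" if "valid_seq \<Lambda> Q" for P Q
    using LC_indep[OF key that, of P] sumw by simp
  have b1: "\<beta> (1 # P) (1 # Q) = 0" for P Q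
  proof -
    have "GS (1 # P) (1 # Q) \<notin> S" using sub by (auto simp: B1_def)
    then show ?thesis by (simp add: \<beta>_def)
  qed
  have shift: "\<alpha> (1 # P) (1 # Q) = \<alpha> P Q" if "valid_seq \<Lambda> Q" for P Q
  proof -
    have z: "(if a' = a then \<beta> (1 # P) (1 # Q) else 0) = 0" using b1[of P Q] by simp
    have "\<alpha> (1 # P) (1 # Q) - \<alpha> P Q + (if a' = a then \<beta> (1 # P) (1 # Q) else 0) = 0"
      using rel[OF vs1[OF that], of "1 # P"] by simp
    then show ?thesis unfolding z by simp
  qed
  have rep: "\<alpha> (replicate n 1 @ P) (replicate n 1 @ Q) = \<alpha> P Q" if "valid_seq \<Lambda> Q" for n P Q
  proof (induction n)
    case 0 then show ?case by simp
  next
    case (Suc n)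
    have "valid_seq \<Lambda> (replicate n 1 @ Q)" using that L by (auto simp: valid_seq_def)
    then show ?case using shift Suc by simp
  qed
  define f where "f g = (case g of GL _ _ _ J \<Rightarrow> length J | _ \<Rightarrow> 0)" for g
  define N where "N = Suc (Max (insert 0 (f ` S)))"
  have azero: "\<alpha> P' Q' = 0" if vQ': "valid_seq \<Lambda> Q'" for P' Q'
  proof -
    have "GL a' a (replicate N 1 @ P') (replicate N 1 @ Q') \<notin> S"
    proof
      assume "GL a' a (replicate N 1 @ P') (replicate N 1 @ Q') \<in> S"
      then have "f (GL a' a (replicate N 1 @ P') (replicate N 1 @ Q')) \<le> Max (insert 0 (f ` S))"
        using fin by (intro Max_ge) auto
      then show False by (simp add: f_def N_def)
    qed
    then have "\<alpha> (replicate N 1 @ P') (replicate N 1 @ Q') = 0" by (simp add: \<alpha>_def)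
    then show ?thesis using rep[OF vQ'] by simp
  qed
  have "\<alpha> P Q = 0" using azero[OF vQ] .
  moreover have "(if a' = a then \<beta> P Q else 0) = 0"
    using rel[OF vQ, of P] azero[OF vQ] azero[OF vtl[OF vQ]] by (simp split: if_splits)
  ultimately show ?thesis by (simp add: \<alpha>_def \<beta>_def split: if_splits)
qed


theorem lemma3:
  fixes \<Lambda> \<Lambda>F :: nat and S :: "gen set" and c :: "gen \<Rightarrow> complex"
  assumes "\<Lambda> > 0" and "\<Lambda>F > 0"
    and "finite S" and "S \<subseteq> B1 \<Lambda> \<Lambda>F"
    and "\<forall>x. valid_basis \<Lambda> \<Lambda>F x \<longrightarrow> (\<forall>y. (\<Sum>g\<in>S. c g * act g x y) = 0)"
  shows "\<forall>g\<in>S. c g = 0"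
proof -
  note L = assms(1) and fin = assms(3) and sub = assms(4) and H = assms(5)
  have v1: "valid_lam \<Lambda>F 1" using assms(2) by (simp add: valid_lam_def)
  have cGL: "c g = 0" if "g \<in> S" "g = GL l1 l2 I J" for g l1 l2 I J
  proof -
    have "valid_lam \<Lambda>F l1" "valid_lam \<Lambda>F l2" "valid_seq \<Lambda> J" using that sub by (auto simp: B1_def)
    from core[OF L fin sub H this, of I] show ?thesis using that by simp
  qed
  have cGS: "c g = 0" if "g \<in> S" "g = GS I J" for g I J
  proof -
    have "valid_seq \<Lambda> J" using that sub by (auto simp: B1_def valid_seq_def)
    from core[OF L fin sub H v1 v1 this, of I] show ?thesis using that by simp
  qed
  have cGR: "c g = 0" if g0S: "g \<in> S" and g0: "g = GR I0 J0 m1 m2" for g I0 J0 m1 m2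
  proof -
    have vm: "valid_lam \<Lambda>F m1" "valid_lam \<Lambda>F m2" "valid_seq \<Lambda> J0" using that sub by (auto simp: B1_def)
    define wR where "wR g p = (if g = GR (rev (fst p)) (rev (snd p)) m1 m2 then 1 else (0::complex))" for g p
    have pg: "c g * act g (1, rev K, m2) (1, rev K', m1) = c g * LC (wR g) K K'" if gS: "g \<in> S" for g K K'
    proof (cases g)
      case (GF l1 l2 I J l3 l4)
      have "l1 + l2 > 2" using gS sub GF by (auto simp: B1_def)
      moreover have "wR g = (\<lambda>_. 0)" using GF by (auto simp: wR_def fun_eq_iff)
      ultimately show ?thesis using GF by (auto simp: LC_zero act_GF)
    next
      case (GL l1 l2 I J) then show ?thesis using cGL gS by simp
    next
      case (GS I J) then show ?thesis using cGS gS by simp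
    next
      case (GR I J l1 l2)
      show ?thesis
      proof (cases "l1 = m1 \<and> l2 = m2")
        case True
        have "wR g = (\<lambda>p. if p = (rev I, rev J) then 1 else 0)"
          using GR True by (auto simp: wR_def fun_eq_iff)
        then show ?thesis using GR True by (simp add: LC_ind act_GR)
      next
        case False
        have "wR g = (\<lambda>_. 0)" using GR False by (auto simp: wR_def fun_eq_iff)
        then show ?thesis using GR False by (auto simp: LC_zero act_GR)
      qed
    qed
    have key: "\<forall>K K'. valid_seq \<Lambda> K \<longrightarrow> LC (\<lambda>p. \<Sum>g\<in>S. c g * wR g p) K K' = 0"
    proof (intro allI impI)
      fix K K' assume vK: "valid_seq \<Lambda> K"
      have h1: "(\<Sum>g\<in>S. c g * act g (1, rev K, m2) (1, rev K', m1)) = 0"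
        using H vK vm v1 by (simp add: valid_basis_def valid_seq_def)
      have "LC (\<lambda>p. \<Sum>g\<in>S. c g * wR g p) K K' = (\<Sum>g\<in>S. c g * LC (wR g) K K')" by (rule LC_lin)
      also have "\<dots> = (\<Sum>g\<in>S. c g * act g (1, rev K, m2) (1, rev K', m1))"
        by (intro sum.cong refl) (rule pg[symmetric])
      finally show "LC (\<lambda>p. \<Sum>g\<in>S. c g * wR g p) K K' = 0" using h1 by simp
    qed
    have "valid_seq \<Lambda> (rev J0)" using vm by (simp add: valid_seq_def)
    from LC_indep[OF key this, of "rev I0"]
    have "(\<Sum>g\<in>S. c g * (if g = g then 1 else 0) * 0 + c g * wR g (rev I0, rev J0)) = 0" by simp
    moreover have "\<And>g. wR g (rev I0, rev J0) = (if g = GR I0 J0 m1 m2 then 1 else 0)" by (simp add: wR_def)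
    ultimately show ?thesis using g0S g0 sum_delta_c'[OF fin, of c "GR I0 J0 m1 m2"] by simp
  qed
  show ?thesis
  proof
    fix g0 assume g0S: "g0 \<in> S"
    show "c g0 = 0"
    proof (cases g0)
      case (GL l1 l2 I J) then show ?thesis using cGL g0S by simp
    next
      case (GS I J) then show ?thesis using cGS g0S by simp
    next
      case (GR I J l1 l2) then show ?thesis using cGR g0S by simp
    next
      case (GF l1 l2 I J l3 l4)
      have vv: "valid_basis \<Lambda> \<Lambda>F (l2, J, l4)" using g0S sub GF by (auto simp: B1_def valid_basis_def)
      have "c g * act g (l2, J, l4) (l1, I, l3) = c g * (if g = g0 then 1 else 0)" if "g \<in> S" for g
      proof (cases g)
        case (GL) then show ?thesis using cGL that by simp
      next
        case (GS) then show ?thesis using cGS that by simp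
      next
        case (GR) then show ?thesis using cGR that by simp
      next
        case (GF) then show ?thesis using \<open>g0 = _\<close> by (auto simp: act_GF)
      qed
      then have "(\<Sum>g\<in>S. c g * act g (l2, J, l4) (l1, I, l3)) = (\<Sum>g\<in>S. c g * (if g = g0 then 1 else 0))"
        by (rule sum.cong[OF refl])
      also have "\<dots> = c g0" using sum_delta_c'[OF fin] g0S by simp
      finally show ?thesis using H vv by simp
    qed
  qed
qed

end
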